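(* Let $\mathcal{C}$ be an $(n,k,d)$ linear MDS code over a finite field $\mathbb{F}_q$ with $d \ge 3$. Then $$\rho(\mathcal{C}) \ge \left\lfloor \frac{1}{d-1}\binom{n}{d-2}\right\rfloor + 1.$$
   Context: An $(n,k,d)$ linear MDS code is a linear code over $\mathbb{F}_q$ of length $n$, dimension $k$ and minimum Hamming distance $d = n-k+1$. A parity-check matrix for $\mathcal{C}$ is any matrix (possibly with linearly dependent rows) whose rows span $\mathcal{C}^\perp$. For a parity-check matrix $H$, the stopping distance $s(H)$ is the largest integer such that for every set of $s(H)-1$ or fewer columns of $H$, the projection of $H$ onto those columns contains at least one row with exactly one nonzero entry. The stopping redundancy $\rho(\mathcal{C})$ is the smallest number of rows of a parity-check matrix $H$ for $\mathcal{C}$ with $s(H) = d$. *)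

theory Defs
  imports "HOL-Analysis.Analysis"
begin

text \<open>Words of length n over a field 'a are vectors 'a^'n, with n = CARD('n).
  A parity-check matrix is a list of rows (repetitions / dependent rows allowed).\<close>

definition hweight :: "'a::zero ^ 'n \<Rightarrow> nat" where
  "hweight x = card {i. x $ i \<noteq> 0}"

definition linear_code :: "('a::field ^ 'n) set \<Rightarrow> bool" where
  "linear_code C \<longleftrightarrow> vec.subspace C"

definition has_min_distance :: "('a::field ^ 'n) set \<Rightarrow> nat \<Rightarrow> bool" where
  "has_min_distance C d \<longleftrightarrow>
     (\<forall>c\<in>C. c \<noteq> 0 \<longrightarrow> d \<le> hweight c) \<and> (\<exists>c\<in>C. c \<noteq> 0 \<and> hweight c = d)"

definition dual_code :: "('a::field ^ 'n) set \<Rightarrow> ('a ^ 'n) set" where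
  "dual_code C = {x. \<forall>c\<in>C. (\<Sum>i\<in>UNIV. x $ i * c $ i) = 0}"

definition parity_check :: "('a::field ^ 'n) set \<Rightarrow> ('a ^ 'n) list \<Rightarrow> bool" where
  "parity_check C H \<longleftrightarrow> vec.span (set H) = dual_code C"

definition stopping_ok :: "('a::zero ^ 'n) list \<Rightarrow> nat \<Rightarrow> bool" where
  "stopping_ok H s \<longleftrightarrow>
     (\<forall>S::'n set. S \<noteq> {} \<and> card S \<le> s - 1 \<longrightarrow>
        (\<exists>r\<in>set H. card {i\<in>S. r $ i \<noteq> 0} = 1))"

definition stopping_distance_is :: "('a::zero ^ 'n) list \<Rightarrow> nat \<Rightarrow> bool" where
  "stopping_distance_is H s \<longleftrightarrow> stopping_ok H s \<and> (\<forall>t>s. \<not> stopping_ok H t)"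

definition stopping_redundancy :: "('a::field ^ 'n) set \<Rightarrow> nat \<Rightarrow> nat" where
  "stopping_redundancy C d =
     (LEAST m. \<exists>H. parity_check C H \<and> length H = m \<and> stopping_distance_is H d)"

end

theory Submission
  imports Defs
begin

lemma vanish_zero:
  fixes C :: "('a::field ^ 'n) set"
  assumes md: "has_min_distance C d" and dn: "d = CARD('n) - k + 1"
    and cC: "c \<in> C" and cK: "k \<le> card K" and van: "\<forall>l\<in>K. c$l = 0"
  shows "c = 0"
proof (rule ccontr)
  assume "c \<noteq> 0"
  then have "d \<le> hweight c" using md cC unfolding has_min_distance_def by auto
  also have "hweight c \<le> card (UNIV - K)" unfolding hweight_def
    by (rule card_mono) (use van in auto)
  also have "\<dots> = CARD('n) - card K" by (simp add: card_Diff_subset)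
  finally show False using dn cK by linarith
qed

lemma restrict_surj:
  fixes C :: "('a::field ^ 'n) set"
  assumes sub: "vec.subspace C" and dimC: "vec.dim C = card K"
    and inj0: "\<And>c. c \<in> C \<Longrightarrow> \<forall>l\<in>K. c$l = 0 \<Longrightarrow> c = 0"
    and iK: "i \<in> K"
  shows "\<exists>c\<in>C. c$i = 1 \<and> (\<forall>l\<in>K. l \<noteq> i \<longrightarrow> c$l = 0)"
proof -
  define D :: "'a^'n^'n" where "D = (\<chi> a b. if a = b \<and> a \<in> K then 1 else 0)"
  define P where "P = (\<lambda>c. D *v c)"
  have Pc: "P c $ l = (if l \<in> K then c $ l else 0)" for c l
    unfolding P_def D_def matrix_vector_mult_def
    by (cases "l \<in> K") (simp_all add: if_distrib[where f="\<lambda>x. x * _"] cong del: if_weak_cong)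
  have lin: "Vector_Spaces.linear (*s) (*s) P" unfolding P_def by simp
  define W where "W = {v::'a^'n. \<forall>l. l \<notin> K \<longrightarrow> v$l = 0}"
  have subW: "vec.subspace W" unfolding vec.subspace_def W_def by auto
  have PCW: "P ` C \<subseteq> W" using Pc W_def by auto
  have subPC: "vec.subspace (P ` C)" using vec.linear_subspace_image[OF lin sub] .
  have spC: "vec.span C = C" using sub by simp
  have injP: "inj_on P (vec.span C)" unfolding spC
  proof (rule inj_onI)
    fix x y assume xy: "x \<in> C" "y \<in> C" "P x = P y"
    have "x - y \<in> C" using sub xy by (simp add: vec.subspace_diff)
    moreover have "\<forall>l\<in>K. (x - y)$l = 0"
    proof
      fix l assume "l \<in> K"
      have "P x $ l = P y $ l" using xy by simp
      then show "(x - y)$l = 0" using Pc \<open>l \<in> K\<close> by simp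
    qed
    ultimately show "x = y" using inj0 by force
  qed
  have dPC: "vec.dim (P ` C) = card K" using vec.dim_image_eq[OF lin injP] dimC by simp
  have finK: "finite K" by simp
  have "W \<subseteq> vec.span ((\<lambda>l. axis l 1) ` K)"
  proof
    fix v assume v: "v \<in> W"
    have "v = (\<Sum>l\<in>K. v$l *s axis l (1::'a))"
      using v unfolding W_def by (auto simp: vec_eq_iff axis_def if_distrib cong: if_cong)
    also have "\<dots> \<in> vec.span ((\<lambda>l. axis l 1) ` K)"
      by (intro vec.span_sum vec.span_scale vec.span_base) auto
    finally show "v \<in> vec.span ((\<lambda>l. axis l 1) ` K)" .
  qed
  then have "vec.dim W \<le> card ((\<lambda>l. axis l (1::'a)) ` K)" by (intro vec.dim_le_card) auto
  also have "\<dots> \<le> card K" by (rule card_image_le) simp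
  finally have "P ` C = W" using vec.subspace_dim_equal[OF subPC subW PCW] dPC by simp
  moreover have "axis i 1 \<in> W" unfolding W_def using iK by (auto simp: axis_def)
  ultimately obtain c where c: "c \<in> C" "P c = axis i 1" by force
  show ?thesis
  proof (intro bexI[OF _ c(1)] conjI ballI impI)
    have "P c $ i = 1" using c by (simp add: axis_def)
    then show "c$i = 1" using Pc iK by simp
  next
    fix l assume "l \<in> K" "l \<noteq> i"
    then have "P c $ l = 0" using c by (simp add: axis_def)
    then show "c$l = 0" using Pc \<open>l \<in> K\<close> by simp
  qed
qed

lemma count_bound:
  fixes R :: "('a::zero ^ 'n) set" and n d :: nat
  assumes finR: "finite R" and nn: "n = CARD('n)" and d3: "3 \<le> d" and dn: "d \<le> n"
    and zb: "\<forall>r\<in>R. r \<noteq> 0 \<longrightarrow> card {i. r$i = 0} + 2 \<le> d"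
    and st: "\<forall>S::'n set. S \<noteq> {} \<and> card S \<le> d - 1 \<longrightarrow> (\<exists>r\<in>R. card {i\<in>S. r$i \<noteq> 0} = 1)"
  shows "(n choose (d-2)) div (d-1) < card R"
proof -
  define Z where "Z r = {i. r$i = 0}" for r :: "'a ^ 'n"
  define A where "A = {S::'n set. card S = d - 1}"
  define R' where "R' = {r\<in>R. card (Z r) = d - 2}"
  have finR': "finite R'" using finR unfolding R'_def by simp
  have finA: "finite A" by simp
  have key: "\<exists>r\<in>R. \<exists>i0\<in>S. r$i0 \<noteq> 0 \<and> r \<noteq> 0 \<and> Z r \<inter> S = S - {i0} \<and> card (Z r) + 2 \<le> d"
    if hS: "S \<noteq> {}" "card S \<le> d - 1" for S
  proof -
    obtain r where r: "r \<in> R" "card {i\<in>S. r$i \<noteq> 0} = 1" using st[rule_format, OF conjI[OF hS]] by blast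
    then obtain i0 where i0: "{i\<in>S. r$i \<noteq> 0} = {i0}" by (metis card_1_singletonE)
    then have i0S: "i0 \<in> S" and ri0: "r$i0 \<noteq> 0" by auto
    have rnz: "r \<noteq> 0" using ri0 by auto
    have Zeq: "Z r \<inter> S = S - {i0}" using i0 unfolding Z_def by auto
    have zr: "card (Z r) + 2 \<le> d" using zb r(1) rnz unfolding Z_def by blast
    show ?thesis using r(1) i0S ri0 rnz Zeq zr by blast
  qed
  have F2: "\<exists>r\<in>R'. Z r \<subseteq> S" if "S \<in> A" for S
  proof -
    have cS: "card S = d - 1" using that A_def by simp
    then have "S \<noteq> {}" using d3 by auto
    then obtain r i0 where r: "r \<in> R" "i0 \<in> S" "Z r \<inter> S = S - {i0}" "card (Z r) + 2 \<le> d"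
      using key[OF \<open>S \<noteq> {}\<close>] cS by (metis order_refl)
    have c1: "card (S - {i0}) = d - 2" using cS r(2) by simp
    have sub: "S - {i0} \<subseteq> Z r" using r(3) by auto
    have "card (S - {i0}) = card (Z r)" using card_mono[OF _ sub] c1 r(4) by simp
    then have "S - {i0} = Z r" using card_subset_eq[OF _ sub] by simp
    then show ?thesis using r(1) c1 unfolding R'_def by auto
  qed
  have F3: "card {S\<in>A. Z r \<subseteq> S} = n - d + 2" if "r \<in> R'" for r
  proof -
    have cZ: "card (Z r) = d - 2" using that R'_def by simp
    have eq: "{S\<in>A. Z r \<subseteq> S} = (\<lambda>x. insert x (Z r)) ` (UNIV - Z r)"
    proof
      show "{S\<in>A. Z r \<subseteq> S} \<subseteq> (\<lambda>x. insert x (Z r)) ` (UNIV - Z r)"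
      proof
        fix S assume "S \<in> {S\<in>A. Z r \<subseteq> S}"
        then have S: "card S = d - 1" "Z r \<subseteq> S" using A_def by auto
        then have "card (S - Z r) = 1" using cZ d3 by (simp add: card_Diff_subset)
        then obtain x where x: "S - Z r = {x}" by (metis card_1_singletonE)
        then have "S = insert x (Z r)" "x \<notin> Z r" using S(2) by auto
        then show "S \<in> (\<lambda>x. insert x (Z r)) ` (UNIV - Z r)" by auto
      qed
    next
      show "(\<lambda>x. insert x (Z r)) ` (UNIV - Z r) \<subseteq> {S\<in>A. Z r \<subseteq> S}"
        using cZ d3 unfolding A_def by auto
    qed
    have "inj_on (\<lambda>x. insert x (Z r)) (UNIV - Z r)"
      by (rule inj_onI) (auto simp: insert_ident)
    then have "card {S\<in>A. Z r \<subseteq> S} = card (UNIV - Z r)" using eq card_image by metis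
    also have "\<dots> = n - (d - 2)" using cZ nn by (simp add: card_Diff_subset)
    finally show ?thesis using d3 dn by simp
  qed
  have cnt: "card {x\<in>X. P x} = (\<Sum>x\<in>X. if P x then 1 else 0)" if "finite X" for X :: "'b set" and P
    using that by (simp add: sum.inter_filter[symmetric])
  have dc: "(\<Sum>r\<in>R'. card {S\<in>A. Z r \<subseteq> S}) = (\<Sum>S\<in>A. card {r\<in>R'. Z r \<subseteq> S})"
  proof -
    have "(\<Sum>r\<in>R'. card {S\<in>A. Z r \<subseteq> S}) = (\<Sum>r\<in>R'. \<Sum>S\<in>A. if Z r \<subseteq> S then 1 else 0)"
      by (rule sum.cong[OF refl], rule cnt[OF finA])
    also have "\<dots> = (\<Sum>S\<in>A. \<Sum>r\<in>R'. if Z r \<subseteq> S then 1 else 0)" by (rule sum.swap)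
    also have "\<dots> = (\<Sum>S\<in>A. card {r\<in>R'. Z r \<subseteq> S})"
      by (rule sum.cong[OF refl], rule cnt[OF finR', symmetric])
    finally show ?thesis .
  qed
  have lhs: "(\<Sum>r\<in>R'. card {S\<in>A. Z r \<subseteq> S}) = card R' * (n - d + 2)"
    using F3 by simp
  have ge1: "1 \<le> card {r\<in>R'. Z r \<subseteq> S}" if "S \<in> A" for S
    using F2[OF that] finR' by (auto simp: Suc_le_eq card_gt_0_iff)
  have cA: "card A = n choose (d - 1)"
  proof -
    have "A = {S. S \<subseteq> UNIV \<and> card S = d - 1}" unfolding A_def by simp
    then show ?thesis using n_subsets[of "UNIV :: 'n set" "d - 1"] nn by simp
  qed
  have sumge: "card A \<le> (\<Sum>S\<in>A. card {r\<in>R'. Z r \<subseteq> S})"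
    using sum_mono[of A "\<lambda>_. 1", OF ge1] by simp
  have main: "card A < card R * (n - d + 2)"
  proof (cases "R' = R")
    case False
    then have "R' \<subset> R" unfolding R'_def by auto
    then have "card R' < card R" using finR by (simp add: psubset_card_mono)
    then have "card R' * (n - d + 2) + (n - d + 2) \<le> card R * (n - d + 2)"
    proof -
      have "Suc (card R') \<le> card R" using \<open>card R' < card R\<close> by simp
      then have "Suc (card R') * (n - d + 2) \<le> card R * (n - d + 2)" by (rule mult_le_mono1)
      then show ?thesis by simp
    qed
    then show ?thesis using sumge dc lhs by linarith
  next
    case True
    obtain S1 :: "'n set" where "card S1 = d - 1" using obtain_subset_with_card_n[of "d - 1" "UNIV :: 'n set"] dn nn
      by (metis diff_le_self le_trans)
    then obtain r0 where r0: "r0 \<in> R'" using F2 A_def by blast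
    define Z0 where "Z0 = Z r0"
    have cZ0: "card Z0 = d - 2" using r0 R'_def Z0_def by simp
    then have "Z0 \<noteq> {}" using d3 by auto
    then obtain r i1 where r: "r \<in> R" "i1 \<in> Z0" "r$i1 \<noteq> 0" "Z r \<inter> Z0 = Z0 - {i1}"
    proof -
      have "card Z0 \<le> d - 1" using cZ0 by simp
      from key[OF \<open>Z0 \<noteq> {}\<close> this] show ?thesis using that by blast
    qed
    have rR': "r \<in> R'" using True r(1) by simp
    have cZr: "card (Z r) = d - 2" using rR' R'_def by simp
    have "i1 \<notin> Z r" using r(3) Z_def by simp
    then have "Z r \<noteq> Z0" using r(2) by auto
    then have "r \<noteq> r0" using Z0_def by auto
    define S0 where "S0 = Z0 \<union> Z r"
    have cI: "card (Z0 \<inter> Z r) = d - 3" using r(2,4) cZ0 by (simp add: Int_commute)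
    have "card Z0 + card (Z r) = card S0 + card (Z0 \<inter> Z r)" unfolding S0_def
      by (rule card_Un_Int) simp_all
    then have "card S0 = d - 1" using cI cZ0 cZr d3 by linarith
    then have S0A: "S0 \<in> A" using A_def by simp
    have "{r0, r} \<subseteq> {r'\<in>R'. Z r' \<subseteq> S0}" using r0 rR' unfolding S0_def Z0_def by auto
    then have two: "2 \<le> card {r'\<in>R'. Z r' \<subseteq> S0}"
      using card_mono[of "{r'\<in>R'. Z r' \<subseteq> S0}" "{r0, r}"] finR' \<open>r \<noteq> r0\<close> by simp
    have "(\<Sum>S\<in>A. (if S = S0 then 2 else 1)) \<le> (\<Sum>S\<in>A. card {r\<in>R'. Z r \<subseteq> S})"
    proof (rule sum_mono)
      fix S assume "S \<in> A"
      show "(if S = S0 then 2 else 1) \<le> card {r\<in>R'. Z r \<subseteq> S}"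
        using two ge1[OF \<open>S \<in> A\<close>] by simp
    qed
    moreover have "(\<Sum>S\<in>A. (if S = S0 then 2 else 1::nat)) = card A + 1"
    proof -
      have "(\<Sum>S\<in>A. (if S = S0 then 2 else 1::nat)) = (\<Sum>S\<in>A. 1 + (if S = S0 then 1 else 0))"
        by (rule sum.cong) auto
      also have "\<dots> = card A + 1" using S0A finA by (simp only: sum.distrib) simp
      finally show ?thesis .
    qed
    ultimately have "card A + 1 \<le> card R' * (n - d + 2)" using dc lhs by linarith
    then show ?thesis using True by simp
  qed
  define m where "m = d - 2"
  have dm: "d - 1 = Suc m" "n - d + 2 = n - m" using d3 dn unfolding m_def by auto
  have id: "(n choose Suc m) * Suc m = (n choose m) * (n - m)"
    using times_binomial_minus1_eq[of "Suc m" n] binomial_absorb_comp[of n m]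
    by (simp add: mult.commute)
  have pos: "0 < n - m" using dn d3 unfolding m_def by simp
  have "(n choose Suc m) * Suc m < card R * (n - m) * Suc m"
  proof -
    have "(n choose Suc m) < card R * (n - m)" using main cA dm by metis
    then show ?thesis by (intro mult_strict_right_mono) auto
  qed
  then have "(n choose m) * (n - m) < (card R * Suc m) * (n - m)" using id by (metis mult.assoc mult.commute)
  then have "(n choose m) < card R * Suc m" using mult_less_cancel2 by blast
  then have "(n choose m) div Suc m < card R" by (rule less_mult_imp_div_less)
  then show ?thesis using dm unfolding m_def by simp
qed

lemma dual_weight:
  fixes C :: "('a::field ^ 'n) set"
  assumes sub: "vec.subspace C" and dimC: "vec.dim C = k" and md: "has_min_distance C d"
    and dn: "d = CARD('n) - k + 1" and r: "r \<in> dual_code C" and rnz: "r \<noteq> 0"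
  shows "card {i. r$i = 0} + 2 \<le> d"
proof -
  have kn: "k \<le> CARD('n)" using dim_subset_UNIV_cart_gen[of C] dimC by simp
  have supp: "k < card {i. r$i \<noteq> 0}"
  proof (rule ccontr)
    assume "\<not> k < card {i. r$i \<noteq> 0}"
    then obtain K where K: "{i. r$i \<noteq> 0} \<subseteq> K" "card K = k"
      using exists_subset_between[of "{i. r$i \<noteq> 0}" k UNIV] kn by auto
    obtain p where p: "r$p \<noteq> 0" using rnz by (auto simp: vec_eq_iff)
    then have pK: "p \<in> K" using K by auto
    have inj0: "\<And>c. c \<in> C \<Longrightarrow> \<forall>l\<in>K. c$l = 0 \<Longrightarrow> c = 0"
      using vanish_zero[OF md dn] K(2) by auto
    obtain c where c: "c \<in> C" "c$p = 1" "\<forall>l\<in>K. l \<noteq> p \<longrightarrow> c$l = 0"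
      using restrict_surj[OF sub _ inj0 pK] dimC K(2) by auto
    have "(\<Sum>i\<in>UNIV. r$i * c$i) = 0" using r c(1) unfolding dual_code_def by auto
    moreover have "(\<Sum>i\<in>UNIV. r$i * c$i) = (\<Sum>i\<in>UNIV. if i = p then r$p else 0)"
    proof (rule sum.cong)
      fix i assume "i \<in> (UNIV :: 'n set)"
      show "r$i * c$i = (if i = p then r$p else 0)"
      proof (cases "i = p")
        case True then show ?thesis using c by simp
      next
        case False
        then show ?thesis using c(3) K(1) by (cases "i \<in> K") auto
      qed
    qed simp
    ultimately show False using p by simp
  qed
  have "card {i. r$i = 0} = CARD('n) - card {i. r$i \<noteq> 0}"
  proof -
    have "{i. r$i = 0} = UNIV - {i. r$i \<noteq> 0}" by auto
    then show ?thesis by (simp add: card_Diff_subset)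
  qed
  moreover have "card {i. r$i \<noteq> 0} \<le> CARD('n)" by (rule card_mono) auto
  ultimately show ?thesis using supp dn kn by linarith
qed

lemma dual_exists:
  fixes C :: "('a::field ^ 'n) set"
  assumes sub: "vec.subspace C" and dimC: "vec.dim C = k" and md: "has_min_distance C d"
    and dn: "d = CARD('n) - k + 1" and S: "card S + k \<le> CARD('n)" and jS: "j \<in> S"
  shows "\<exists>x\<in>dual_code C. x$j \<noteq> 0 \<and> (\<forall>i\<in>S. i \<noteq> j \<longrightarrow> x$i = 0)"
proof -
  have "k \<le> card (UNIV - S)" using S by (simp add: card_Diff_subset)
  then obtain K where K: "K \<subseteq> UNIV - S" "card K = k"
    using obtain_subset_with_card_n[of k "UNIV - S"] by metis
  have jK: "j \<notin> K" using K jS by auto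
  have inj0: "\<And>c. c \<in> C \<Longrightarrow> \<forall>l\<in>K. c$l = 0 \<Longrightarrow> c = 0"
    using vanish_zero[OF md dn] K(2) by auto
  have ex: "\<forall>l\<in>K. \<exists>c\<in>C. c$l = 1 \<and> (\<forall>m\<in>K. m \<noteq> l \<longrightarrow> c$m = 0)"
    using restrict_surj[OF sub _ inj0] dimC K(2) by auto
  obtain cl where cl0: "\<forall>l\<in>K. cl l \<in> C \<and> cl l $ l = 1 \<and> (\<forall>m\<in>K. m \<noteq> l \<longrightarrow> cl l $ m = 0)"
    using bchoice[OF ex[unfolded Bex_def]] by blast
  have cl: "\<And>l. l \<in> K \<Longrightarrow> cl l \<in> C \<and> cl l $ l = 1 \<and> (\<forall>m\<in>K. m \<noteq> l \<longrightarrow> cl l $ m = 0)"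
    using cl0 by blast
  define x where "x = (\<chi> i. if i = j then 1 else if i \<in> K then - (cl i $ j) else (0::'a))"
  have "x \<in> dual_code C" unfolding dual_code_def
  proof (clarify)
    fix c assume cC: "c \<in> C"
    define c' where "c' = c - (\<Sum>l\<in>K. c$l *s cl l)"
    have "(\<Sum>l\<in>K. c$l *s cl l) \<in> C"
      using cl by (intro vec.subspace_sum[OF sub] vec.subspace_scale[OF sub]) auto
    then have c'C: "c' \<in> C" unfolding c'_def using cC sub by (simp add: vec.subspace_diff)
    have "\<forall>m\<in>K. c'$m = 0"
    proof
      fix m assume mK: "m \<in> K"
      have "(\<Sum>l\<in>K. c$l * cl l $ m) = (\<Sum>l\<in>K. if l = m then c$m else 0)"
        by (rule sum.cong) (use cl mK in auto)
      also have "\<dots> = c$m" using mK by simp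
      finally show "c'$m = 0" unfolding c'_def by simp
    qed
    then have "c' = 0" using inj0 c'C by blast
    then have "c'$j = 0" by simp
    then have cj: "c$j = (\<Sum>l\<in>K. c$l * cl l $ j)" unfolding c'_def by simp
    have "(\<Sum>i\<in>UNIV. x$i * c$i) = (\<Sum>i\<in>UNIV. (if i = j then c$j else 0) - (if i \<in> K then cl i $ j * c$i else 0))"
    proof (rule sum.cong[OF refl])
      fix i
      show "x$i * c$i = (if i = j then c$j else 0) - (if i \<in> K then cl i $ j * c$i else 0)"
        using jK by (cases "i = j"; cases "i \<in> K") (simp_all add: x_def)
    qed
    also have "\<dots> = c$j - (\<Sum>i\<in>K. cl i $ j * c$i)"
      by (simp only: sum_subtractf) (simp add: sum.inter_restrict[symmetric])
    also have "\<dots> = 0" using cj by (simp add: mult.commute)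
    finally show "(\<Sum>i\<in>UNIV. x$i * c$i) = 0" .
  qed
  moreover have "x$j \<noteq> 0" by (simp add: x_def)
  moreover have "\<forall>i\<in>S. i \<noteq> j \<longrightarrow> x$i = 0" using K(1) by (auto simp: x_def)
  ultimately show ?thesis by blast
qed

lemma not_stop:
  fixes C :: "('a::field ^ 'n) set"
  assumes md: "has_min_distance C d" and rows: "set H \<subseteq> dual_code C" and dt: "d < t"
  shows "\<not> stopping_ok H t"
proof
  assume so: "stopping_ok H t"
  obtain c0 where c0: "c0 \<in> C" "c0 \<noteq> 0" "hweight c0 = d" using md unfolding has_min_distance_def by auto
  define S where "S = {i. c0$i \<noteq> 0}"
  have "S \<noteq> {}" using c0(2) unfolding S_def by (auto simp: vec_eq_iff)
  moreover have "card S \<le> t - 1" using c0(3) dt unfolding S_def hweight_def by simp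
  ultimately obtain r where r: "r \<in> set H" "card {i\<in>S. r$i \<noteq> 0} = 1"
    using so[unfolded stopping_ok_def, rule_format, OF conjI] by blast
  then obtain i0 where i0: "{i\<in>S. r$i \<noteq> 0} = {i0}" by (metis card_1_singletonE)
  have "(\<Sum>i\<in>UNIV. r$i * c0$i) = 0" using r(1) rows c0(1) unfolding dual_code_def by auto
  moreover have "(\<Sum>i\<in>UNIV. r$i * c0$i) = (\<Sum>i\<in>UNIV. if i = i0 then r$i0 * c0$i0 else 0)"
  proof (rule sum.cong)
    fix i assume "i \<in> (UNIV :: 'n set)"
    show "r$i * c0$i = (if i = i0 then r$i0 * c0$i0 else 0)"
      using i0 unfolding S_def by (cases "i = i0") (auto simp: set_eq_iff)
  qed simp
  moreover have "r$i0 * c0$i0 \<noteq> 0" using i0 unfolding S_def by auto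
  ultimately show False by simp
qed

theorem theorem17:
  fixes C :: "('a::{field,finite} ^ 'n) set" and n k d :: nat
  assumes "linear_code C"
    and "n = CARD('n)"
    and "vec.dim C = k"
    and "has_min_distance C d"
    and "d = n - k + 1"
    and "d \<ge> 3"
  shows "(n choose (d - 2)) div (d - 1) + 1 \<le> stopping_redundancy C d"
proof -
  note nn = assms(2) and dimC = assms(3) and md = assms(4) and d3 = assms(6)
  have sub: "vec.subspace C" using assms(1) unfolding linear_code_def .
  have dn: "d = CARD('n) - k + 1" using assms(2,5) by simp
  obtain c0 where c0: "c0 \<in> C" "c0 \<noteq> 0" "hweight c0 = d"
    using md unfolding has_min_distance_def by auto
  have "hweight c0 \<le> CARD('n)" unfolding hweight_def by (rule card_mono) auto
  then have dle: "d \<le> n" using c0(3) nn by simp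
  have kn: "k \<le> n" using dim_subset_UNIV_cart_gen[of C] dimC nn by simp
  have subD: "vec.subspace (dual_code C)"
    unfolding vec.subspace_def dual_code_def
    by (auto simp: distrib_right sum.distrib mult.assoc sum_distrib_left[symmetric])
  have "finite (dual_code C)" by simp
  then obtain H0 where H0: "set H0 = dual_code C" using finite_list by blast
  have pc0: "parity_check C H0" unfolding parity_check_def H0 using subD by simp
  have so0: "stopping_ok H0 d"
    unfolding stopping_ok_def
  proof (intro allI impI)
    fix S :: "'n set" assume S: "S \<noteq> {} \<and> card S \<le> d - 1"
    then obtain j where jS: "j \<in> S" by auto
    have "card S + k \<le> CARD('n)" using S dn kn nn by linarith
    then obtain x where x: "x \<in> dual_code C" "x$j \<noteq> 0" "\<forall>i\<in>S. i \<noteq> j \<longrightarrow> x$i = 0"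
      using dual_exists[OF sub dimC md dn _ jS] by blast
    have "{i\<in>S. x$i \<noteq> 0} = {j}" using x jS by auto
    then show "\<exists>r\<in>set H0. card {i\<in>S. r$i \<noteq> 0} = 1" using x(1) H0 by (intro bexI[of _ x]) auto
  qed
  have rowsD: "set H \<subseteq> dual_code C" if "parity_check C H" for H :: "('a ^ 'n) list"
    using that vec.span_superset[of "set H"] unfolding parity_check_def by blast
  have sd: "stopping_distance_is H d" if "parity_check C H" "stopping_ok H d" for H :: "('a ^ 'n) list"
    unfolding stopping_distance_is_def using that not_stop[OF md rowsD[OF that(1)]] by blast
  have ex: "\<exists>m H. parity_check C H \<and> length H = m \<and> stopping_distance_is H d"
    using pc0 sd[OF pc0 so0] by blast
  then obtain H where H: "parity_check C H" "length H = stopping_redundancy C d" "stopping_distance_is H d"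
    using LeastI_ex[of "\<lambda>m. \<exists>H. parity_check C H \<and> length H = m \<and> stopping_distance_is H d"]
    unfolding stopping_redundancy_def by blast
  have rows: "set H \<subseteq> dual_code C" using rowsD[OF H(1)] .
  have soH: "stopping_ok H d" using H(3) unfolding stopping_distance_is_def by blast
  have zb: "\<forall>r\<in>set H. r \<noteq> 0 \<longrightarrow> card {i. r$i = 0} + 2 \<le> d"
    using dual_weight[OF sub dimC md dn] rows by blast
  have st: "\<forall>S::'n set. S \<noteq> {} \<and> card S \<le> d - 1 \<longrightarrow> (\<exists>r\<in>set H. card {i\<in>S. r$i \<noteq> 0} = 1)"
    using soH unfolding stopping_ok_def .
  have "(n choose (d-2)) div (d-1) < card (set H)"
    by (rule count_bound[OF _ nn d3 dle zb st]) simp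
  also have "\<dots> \<le> length H" by (rule card_length)
  finally show ?thesis using H(2) by simp
qed

end
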